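(* Let $X$ be a locally compact Hausdorff space. The category $\mathsf{Point}_X$ of pointed extensions of $X$ has the following properties: it is a poset; it admits small colimits, in particular it has an initial object; it admits small limits, in particular it has a final object; and products distribute over small colimits.
   Context: A pointed extension $X_\ast$ of $X$ is a compactly generated Hausdorff topology on the underlying set of $\ast\amalg X$ extending the given topology on $X$. $\mathsf{Point}_X$ is the full subcategory of the undercategory $\mathrm{Top}^{X_+/}$ (where $X_+$ is $X$ with a disjoint basepoint) consisting of the pointed extensions of $X$. *)

theory Defs
  imports "HOL-Analysis.Analysis"
begin

record ('o, 'm) cat =
  cob  :: "'o set"
  chom :: "'o \<Rightarrow> 'o \<Rightarrow> 'm set"
  cid  :: "'o \<Rightarrow> 'm"
  ccomp :: "'m \<Rightarrow> 'm \<Rightarrow> 'm"   (* ccomp C g f = g after f *)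

definition category :: "('o, 'm) cat \<Rightarrow> bool" where
  "category C \<longleftrightarrow>
     (\<forall>A\<in>cob C. cid C A \<in> chom C A A) \<and>
     (\<forall>A\<in>cob C. \<forall>B\<in>cob C. \<forall>D\<in>cob C. \<forall>f\<in>chom C A B. \<forall>g\<in>chom C B D.
         ccomp C g f \<in> chom C A D) \<and>
     (\<forall>A\<in>cob C. \<forall>B\<in>cob C. \<forall>f\<in>chom C A B.
         ccomp C (cid C B) f = f \<and> ccomp C f (cid C A) = f) \<and>
     (\<forall>A\<in>cob C. \<forall>B\<in>cob C. \<forall>D\<in>cob C. \<forall>E\<in>cob C.
        \<forall>f\<in>chom C A B. \<forall>g\<in>chom C B D. \<forall>h\<in>chom C D E.
         ccomp C h (ccomp C g f) = ccomp C (ccomp C h g) f)"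

text \<open>A functor (diagram) \<open>J \<rightarrow> C\<close> given by an object map and an arrow map
  (the arrow map also receives source and target, since hom-sets may overlap).\<close>
definition is_functor :: "('j, 'b) cat \<Rightarrow> ('o, 'm) cat \<Rightarrow> ('j \<Rightarrow> 'o) \<Rightarrow> ('j \<Rightarrow> 'j \<Rightarrow> 'b \<Rightarrow> 'm) \<Rightarrow> bool" where
  "is_functor J C Fo Fa \<longleftrightarrow>
     (\<forall>i\<in>cob J. Fo i \<in> cob C) \<and>
     (\<forall>i\<in>cob J. \<forall>j\<in>cob J. \<forall>f\<in>chom J i j. Fa i j f \<in> chom C (Fo i) (Fo j)) \<and>
     (\<forall>i\<in>cob J. Fa i i (cid J i) = cid C (Fo i)) \<and>
     (\<forall>i\<in>cob J. \<forall>j\<in>cob J. \<forall>k\<in>cob J. \<forall>f\<in>chom J i j. \<forall>g\<in>chom J j k.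
        Fa i k (ccomp J g f) = ccomp C (Fa j k g) (Fa i j f))"

definition is_cocone :: "('o, 'm) cat \<Rightarrow> ('j, 'b) cat \<Rightarrow> ('j \<Rightarrow> 'o) \<Rightarrow> ('j \<Rightarrow> 'j \<Rightarrow> 'b \<Rightarrow> 'm)
     \<Rightarrow> 'o \<Rightarrow> ('j \<Rightarrow> 'm) \<Rightarrow> bool" where
  "is_cocone C J Fo Fa L lam \<longleftrightarrow> L \<in> cob C \<and>
     (\<forall>j\<in>cob J. lam j \<in> chom C (Fo j) L) \<and>
     (\<forall>i\<in>cob J. \<forall>j\<in>cob J. \<forall>f\<in>chom J i j. ccomp C (lam j) (Fa i j f) = lam i)"

definition is_colimit :: "('o, 'm) cat \<Rightarrow> ('j, 'b) cat \<Rightarrow> ('j \<Rightarrow> 'o) \<Rightarrow> ('j \<Rightarrow> 'j \<Rightarrow> 'b \<Rightarrow> 'm)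
     \<Rightarrow> 'o \<Rightarrow> ('j \<Rightarrow> 'm) \<Rightarrow> bool" where
  "is_colimit C J Fo Fa L lam \<longleftrightarrow> is_cocone C J Fo Fa L lam \<and>
     (\<forall>L' mu. is_cocone C J Fo Fa L' mu \<longrightarrow>
        (\<exists>!u. u \<in> chom C L L' \<and> (\<forall>j\<in>cob J. ccomp C u (lam j) = mu j)))"

definition is_cone :: "('o, 'm) cat \<Rightarrow> ('j, 'b) cat \<Rightarrow> ('j \<Rightarrow> 'o) \<Rightarrow> ('j \<Rightarrow> 'j \<Rightarrow> 'b \<Rightarrow> 'm)
     \<Rightarrow> 'o \<Rightarrow> ('j \<Rightarrow> 'm) \<Rightarrow> bool" where
  "is_cone C J Fo Fa L lam \<longleftrightarrow> L \<in> cob C \<and>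
     (\<forall>j\<in>cob J. lam j \<in> chom C L (Fo j)) \<and>
     (\<forall>i\<in>cob J. \<forall>j\<in>cob J. \<forall>f\<in>chom J i j. ccomp C (Fa i j f) (lam i) = lam j)"

definition is_limit :: "('o, 'm) cat \<Rightarrow> ('j, 'b) cat \<Rightarrow> ('j \<Rightarrow> 'o) \<Rightarrow> ('j \<Rightarrow> 'j \<Rightarrow> 'b \<Rightarrow> 'm)
     \<Rightarrow> 'o \<Rightarrow> ('j \<Rightarrow> 'm) \<Rightarrow> bool" where
  "is_limit C J Fo Fa L lam \<longleftrightarrow> is_cone C J Fo Fa L lam \<and>
     (\<forall>L' mu. is_cone C J Fo Fa L' mu \<longrightarrow>
        (\<exists>!u. u \<in> chom C L' L \<and> (\<forall>j\<in>cob J. ccomp C (lam j) u = mu j)))"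

definition has_colimits_of_shape :: "('o, 'm) cat \<Rightarrow> ('j, 'b) cat \<Rightarrow> bool" where
  "has_colimits_of_shape C J \<longleftrightarrow>
     (\<forall>Fo Fa. is_functor J C Fo Fa \<longrightarrow> (\<exists>L lam. is_colimit C J Fo Fa L lam))"

definition has_limits_of_shape :: "('o, 'm) cat \<Rightarrow> ('j, 'b) cat \<Rightarrow> bool" where
  "has_limits_of_shape C J \<longleftrightarrow>
     (\<forall>Fo Fa. is_functor J C Fo Fa \<longrightarrow> (\<exists>L lam. is_limit C J Fo Fa L lam))"

definition is_poset_cat :: "('o, 'm) cat \<Rightarrow> bool" where
  "is_poset_cat C \<longleftrightarrow>
     (\<forall>A\<in>cob C. \<forall>B\<in>cob C. \<forall>f\<in>chom C A B. \<forall>g\<in>chom C A B. f = g) \<and>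
     (\<forall>A\<in>cob C. \<forall>B\<in>cob C. chom C A B \<noteq> {} \<and> chom C B A \<noteq> {} \<longrightarrow> A = B)"

definition initial_object :: "('o, 'm) cat \<Rightarrow> 'o \<Rightarrow> bool" where
  "initial_object C I \<longleftrightarrow> I \<in> cob C \<and> (\<forall>A\<in>cob C. \<exists>!f. f \<in> chom C I A)"

definition terminal_object :: "('o, 'm) cat \<Rightarrow> 'o \<Rightarrow> bool" where
  "terminal_object C T \<longleftrightarrow> T \<in> cob C \<and> (\<forall>A\<in>cob C. \<exists>!f. f \<in> chom C A T)"

definition is_product :: "('o, 'm) cat \<Rightarrow> 'o \<Rightarrow> 'o \<Rightarrow> 'o \<Rightarrow> 'm \<Rightarrow> 'm \<Rightarrow> bool" where
  "is_product C A B P p1 p2 \<longleftrightarrow> P \<in> cob C \<and> p1 \<in> chom C P A \<and> p2 \<in> chom C P B \<and>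
     (\<forall>Z\<in>cob C. \<forall>f\<in>chom C Z A. \<forall>g\<in>chom C Z B.
        \<exists>!u. u \<in> chom C Z P \<and> ccomp C p1 u = f \<and> ccomp C p2 u = g)"

text \<open>Binary products distribute over colimits of shape \<open>J\<close>: for every object \<open>Y\<close>,
  every colimit cocone \<open>(L, lam)\<close> of a diagram \<open>D\<close>, every product \<open>Y \<times> L\<close> and every
  choice of products \<open>Y \<times> D j\<close>, the induced cocone \<open>(Y \<times> lam j)\<close> on the induced
  diagram \<open>Y \<times> D\<close> is a colimit cocone (i.e. \<open>Y \<times> -\<close> preserves the colimit).\<close>
definition products_distribute_over_shape :: "('o, 'm) cat \<Rightarrow> ('j, 'b) cat \<Rightarrow> bool" where
  "products_distribute_over_shape C J \<longleftrightarrow>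
     (\<forall>Y\<in>cob C. \<forall>Do Da L lam P p1 p2 Q q1 q2.
        is_functor J C Do Da \<and> is_colimit C J Do Da L lam \<and>
        is_product C Y L P p1 p2 \<and>
        (\<forall>j\<in>cob J. is_product C Y (Do j) (Q j) (q1 j) (q2 j)) \<longrightarrow>
        is_colimit C J Q
          (\<lambda>i j f. THE u. u \<in> chom C (Q i) (Q j) \<and> ccomp C (q1 j) u = q1 i \<and>
                           ccomp C (q2 j) u = ccomp C (Da i j f) (q2 i))
          P
          (\<lambda>j. THE u. u \<in> chom C (Q j) P \<and> ccomp C p1 u = q1 j \<and>
                      ccomp C p2 u = ccomp C (lam j) (q2 j)))"

text \<open>The underlying set of \<open>* \<amalg> X\<close>, with \<open>None\<close> the basepoint and \<open>Some x\<close> for \<open>x \<in> X\<close>.\<close>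
definition pt_carrier :: "'a topology \<Rightarrow> 'a option set" where
  "pt_carrier X = insert None (Some ` topspace X)"

text \<open>\<open>X\<^sub>+\<close>: \<open>X\<close> with a disjoint (isolated) basepoint.\<close>
definition plus_top :: "'a topology \<Rightarrow> 'a option topology" where
  "plus_top X = topology (\<lambda>U. U \<subseteq> pt_carrier X \<and> openin X {x. Some x \<in> U})"

text \<open>The structure map \<open>X\<^sub>+ \<rightarrow> X\<^sub>*\<close> is the identity of the underlying set.\<close>
definition pointed_extension :: "'a topology \<Rightarrow> 'a option topology \<Rightarrow> bool" where
  "pointed_extension X T \<longleftrightarrow>
     topspace T = pt_carrier X \<and>
     Hausdorff_space T \<and> k_space T \<and>
     embedding_map X T Some \<and>
     continuous_map (plus_top X) T (\<lambda>p. p)"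

text \<open>Morphisms of the undercategory \<open>Top\<^bsup>X\<^sub>+/\<^esup>\<close> between pointed extensions:
  continuous maps commuting with the structure maps from \<open>X\<^sub>+\<close> (as functions on the
  underlying set, i.e. extensional outside it).\<close>
definition Point :: "'a topology \<Rightarrow> ('a option topology, 'a option \<Rightarrow> 'a option) cat" where
  "Point X = \<lparr> cob = {T. pointed_extension X T},
     chom = (\<lambda>T T'. {f. continuous_map T T' f \<and>
                         (\<forall>p\<in>topspace (plus_top X). f p = p) \<and>
                         (\<forall>p. p \<notin> topspace T \<longrightarrow> f p = undefined)}),
     cid = (\<lambda>T. restrict (\<lambda>p. p) (topspace T)),
     ccomp = (\<lambda>g f. restrict (g \<circ> f) (pt_carrier X)) \<rparr>"

end

theory Submission
  imports Defs
begin


definition perp :: "'a topology \<Rightarrow> 'a set set \<Rightarrow> 'a set set" where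
  "perp X A = {S. closedin X S \<and> (\<forall>C\<in>A. compactin X (C \<inter> S))}"

lemma perp_closed: "S \<in> perp X A \<Longrightarrow> closedin X S"
  by (simp add: perp_def)

lemma perp_anti: "A \<subseteq> B \<Longrightarrow> perp X B \<subseteq> perp X A"
  by (auto simp: perp_def)

lemma perp_sub: "perp X A \<subseteq> Collect (closedin X)"
  by (auto simp: perp_def)

lemma pp_sup: "A \<subseteq> Collect (closedin X) \<Longrightarrow> A \<subseteq> perp X (perp X A)"
  by (auto simp: perp_def Int_commute)

lemma perp3: "A \<subseteq> Collect (closedin X) \<Longrightarrow> perp X (perp X (perp X A)) = perp X A"
  by (meson perp_anti pp_sup perp_sub subset_antisym)

definition fam :: "'a topology \<Rightarrow> 'a set set \<Rightarrow> bool" where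
  "fam X F \<longleftrightarrow> perp X (perp X F) = F"

lemma fam_pp: "A \<subseteq> Collect (closedin X) \<Longrightarrow> fam X (perp X (perp X A))"
  by (simp add: fam_def perp3 perp_sub)

lemma fam_closed: "fam X F \<Longrightarrow> C \<in> F \<Longrightarrow> closedin X C"
proof -
  assume f: "fam X F" and C: "C \<in> F"
  then have "C \<in> perp X (perp X F)" unfolding fam_def by simp
  then show ?thesis by (rule perp_closed)
qed

lemma fam_sub: "fam X F \<Longrightarrow> F \<subseteq> Collect (closedin X)"
  using fam_closed by blast

lemma fam_mem: "fam X F \<Longrightarrow> closedin X z \<Longrightarrow> (\<And>S. S \<in> perp X F \<Longrightarrow> compactin X (S \<inter> z)) \<Longrightarrow> z \<in> F"
proof -
  assume f: "fam X F" and z: "closedin X z" and h: "\<And>S. S \<in> perp X F \<Longrightarrow> compactin X (S \<inter> z)"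
  have "z \<in> perp X (perp X F)" unfolding perp_def[of X "perp X F"] using z h by blast
  then show ?thesis using f unfolding fam_def by simp
qed

lemma fam_memD: "fam X F \<Longrightarrow> z \<in> F \<Longrightarrow> S \<in> perp X F \<Longrightarrow> compactin X (S \<inter> z)"
proof -
  assume f: "fam X F" and z: "z \<in> F" and S: "S \<in> perp X F"
  have "z \<in> perp X (perp X F)" using f z unfolding fam_def by simp
  then show ?thesis using S unfolding perp_def[of X "perp X F"] by blast
qed

lemma fam_compact: "Hausdorff_space X \<Longrightarrow> fam X F \<Longrightarrow> compactin X K \<Longrightarrow> K \<in> F"
  by (meson closed_Int_compactin compactin_imp_closedin fam_mem perp_closed)

lemma fam_empty: "fam X F \<Longrightarrow> {} \<in> F"
  by (rule fam_mem) auto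

lemma fam_Un: "fam X F \<Longrightarrow> C \<in> F \<Longrightarrow> D \<in> F \<Longrightarrow> C \<union> D \<in> F"
  apply (rule fam_mem, assumption)
   apply (meson closedin_Un fam_closed)
  by (simp add: Int_Un_distrib compactin_Un fam_memD)

lemma fam_Int_closed: "fam X F \<Longrightarrow> C \<in> F \<Longrightarrow> closedin X D \<Longrightarrow> C \<inter> D \<in> F"
  apply (rule fam_mem, assumption)
   apply (meson closedin_Int fam_closed)
  by (metis compact_Int_closedin fam_memD inf_assoc)

lemma fam_closed_all: "fam X (Collect (closedin X))"
  unfolding fam_def
  by (rule subset_antisym[OF perp_sub pp_sup]) simp

lemma fam_Inter: "(\<And>j. j \<in> I \<Longrightarrow> fam X (B j)) \<Longrightarrow> fam X {C. closedin X C \<and> (\<forall>j\<in>I. C \<in> B j)}"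
proof -
  assume B: "\<And>j. j \<in> I \<Longrightarrow> fam X (B j)"
  let ?G = "{C. closedin X C \<and> (\<forall>j\<in>I. C \<in> B j)}"
  have "perp X (perp X ?G) \<subseteq> ?G"
  proof
    fix z assume z: "z \<in> perp X (perp X ?G)"
    have "z \<in> B j" if "j \<in> I" for j
    proof -
      have "?G \<subseteq> B j" using that by auto
      then have "perp X (perp X ?G) \<subseteq> perp X (perp X (B j))"
        by (intro perp_anti)
      then show ?thesis using z B[OF that] by (auto simp: fam_def)
    qed
    then show "z \<in> ?G" using z perp_closed by blast
  qed
  moreover have "?G \<subseteq> perp X (perp X ?G)" by (rule pp_sup) auto
  ultimately show ?thesis by (simp add: fam_def)
qed

definition sx :: "'a option set \<Rightarrow> 'a set" where "sx U = {x. Some x \<in> U}"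

definition topoP :: "'a topology \<Rightarrow> 'a set set \<Rightarrow> 'a option set \<Rightarrow> bool" where
  "topoP X F U \<longleftrightarrow> U \<subseteq> pt_carrier X \<and> openin X (sx U) \<and>
        (None \<in> U \<longrightarrow> topspace X - sx U \<in> F)"

definition topo :: "'a topology \<Rightarrow> 'a set set \<Rightarrow> 'a option topology" where
  "topo X F = topology (topoP X F)"

definition good :: "'a topology \<Rightarrow> 'a set set \<Rightarrow> bool" where
  "good X F \<longleftrightarrow> F \<subseteq> Collect (closedin X) \<and> {} \<in> F \<and> (\<forall>C\<in>F. \<forall>D\<in>F. C \<union> D \<in> F) \<and>
     (\<forall>C\<in>F. \<forall>D. closedin X D \<longrightarrow> C \<inter> D \<in> F)"

lemma fam_good: "fam X F \<Longrightarrow> good X F"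
  by (simp add: good_def fam_sub fam_empty fam_Un fam_Int_closed)

lemma good_closed_all: "good X (Collect (closedin X))"
  by (auto simp: good_def closedin_Un closedin_Int)

lemma good_Un: "good X F \<Longrightarrow> C \<in> F \<Longrightarrow> D \<in> F \<Longrightarrow> C \<union> D \<in> F"
  unfolding good_def by blast
lemma good_Int: "good X F \<Longrightarrow> C \<in> F \<Longrightarrow> closedin X D \<Longrightarrow> C \<inter> D \<in> F"
  unfolding good_def by blast
lemma good_empty: "good X F \<Longrightarrow> {} \<in> F"
  unfolding good_def by blast
lemma good_closed: "good X F \<Longrightarrow> C \<in> F \<Longrightarrow> closedin X C"
  unfolding good_def by blast

lemma istopology_topo:
  assumes "good X F"
  shows "istopology (topoP X F)"
  unfolding istopology_def
proof (rule conjI; intro allI impI)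
  fix S T assume S: "topoP X F S" and T: "topoP X F T"
  have e: "sx (S \<inter> T) = sx S \<inter> sx T" by (auto simp: sx_def)
  have e2: "topspace X - sx (S \<inter> T) = (topspace X - sx S) \<union> (topspace X - sx T)" by (auto simp: sx_def)
  show "topoP X F (S \<inter> T)"
    unfolding topoP_def
  proof (intro conjI impI)
    show "S \<inter> T \<subseteq> pt_carrier X" using S by (auto simp: topoP_def)
    show "openin X (sx (S \<inter> T))" unfolding e using S T by (auto simp: topoP_def)
    assume "None \<in> S \<inter> T"
    then have "topspace X - sx S \<in> F" "topspace X - sx T \<in> F" using S T by (auto simp: topoP_def)
    then show "topspace X - sx (S \<inter> T) \<in> F" unfolding e2 by (rule good_Un[OF assms])
  qed
next
  fix K assume K: "\<forall>U\<in>K. topoP X F U"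
  have e: "sx (\<Union>K) = \<Union> (sx ` K)" by (auto simp: sx_def)
  have o: "openin X (sx (\<Union>K))" unfolding e using K by (auto simp: topoP_def)
  show "topoP X F (\<Union>K)"
    unfolding topoP_def
  proof (intro conjI impI)
    show "\<Union>K \<subseteq> pt_carrier X" using K by (auto simp: topoP_def)
    show "openin X (sx (\<Union>K))" by (rule o)
    assume "None \<in> \<Union>K"
    then obtain U where U: "U \<in> K" "None \<in> U" by auto
    have "topspace X - sx (\<Union>K) = (topspace X - sx U) \<inter> (topspace X - sx (\<Union>K))"
      using U by (auto simp: sx_def)
    moreover have "closedin X (topspace X - sx (\<Union>K))" using o by (simp add: closedin_diff)
    moreover have "topspace X - sx U \<in> F" using K U by (auto simp: topoP_def)
    ultimately show "topspace X - sx (\<Union>K) \<in> F" using good_Int[OF assms] by metis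
  qed
qed

lemma openin_topo: "good X F \<Longrightarrow> openin (topo X F) U \<longleftrightarrow> U \<subseteq> pt_carrier X \<and> openin X (sx U) \<and>
        (None \<in> U \<longrightarrow> topspace X - sx U \<in> F)"
  unfolding topo_def by (simp add: istopology_topo topoP_def)

lemma topspace_topo: "good X F \<Longrightarrow> topspace (topo X F) = pt_carrier X"
proof -
  assume g: "good X F"
  have "sx (pt_carrier X) = topspace X" by (auto simp: sx_def pt_carrier_def)
  then have "openin (topo X F) (pt_carrier X)" using g by (simp add: openin_topo good_empty)
  then show ?thesis using g
    by (metis openin_subset openin_topo openin_topspace subset_antisym)
qed

lemma plus_top_topo: "plus_top X = topo X (Collect (closedin X))"
  unfolding plus_top_def topo_def
  apply (rule arg_cong[where f=topology])
  apply (rule ext)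
  apply (auto simp: sx_def topoP_def closedin_diff)
  done



lemma sx_Some: "sx (Some ` A) = A" by (auto simp: sx_def)
lemma sx_ins: "sx (insert None (Some ` A)) = A" by (auto simp: sx_def)

lemma pt_split: "U \<subseteq> pt_carrier X \<Longrightarrow> None \<notin> U \<Longrightarrow> U = Some ` sx U"
  by (auto simp: sx_def pt_carrier_def)
lemma pt_split2: "U \<subseteq> pt_carrier X \<Longrightarrow> None \<in> U \<Longrightarrow> U = insert None (Some ` sx U)"
  by (auto simp: sx_def pt_carrier_def)
lemma sx_sub: "U \<subseteq> pt_carrier X \<Longrightarrow> sx U \<subseteq> topspace X"
  by (auto simp: sx_def pt_carrier_def)

lemma openin_topo_Some: "good X F \<Longrightarrow> openin (topo X F) (Some ` U) \<longleftrightarrow> openin X U"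
  by (auto simp: openin_topo sx_Some pt_carrier_def dest: openin_subset)

lemma closedin_topo_Some:
  assumes g: "good X F" and C: "C \<subseteq> topspace X"
  shows "closedin (topo X F) (Some ` C) \<longleftrightarrow> C \<in> F"
proof -
  have e: "topspace (topo X F) - Some ` C = insert None (Some ` (topspace X - C))"
    using g by (auto simp: topspace_topo pt_carrier_def)
  have e2: "topspace X - (topspace X - C) = C" using C by auto
  have "closedin (topo X F) (Some ` C) \<longleftrightarrow> openin X (topspace X - C) \<and> C \<in> F"
    unfolding closedin_def e using g C
    by (auto simp: openin_topo sx_ins e2 topspace_topo pt_carrier_def)
  moreover have "C \<in> F \<Longrightarrow> openin X (topspace X - C)" using g unfolding good_def by auto
  ultimately show ?thesis by auto
qed

lemma continuous_Some_topo: "good X F \<Longrightarrow> continuous_map X (topo X F) Some"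
  unfolding continuous_map_def
proof (intro conjI allI impI)
  assume g: "good X F"
  show "Some \<in> topspace X \<rightarrow> topspace (topo X F)"
    using g by (auto simp: topspace_topo pt_carrier_def)
  fix U assume "openin (topo X F) U"
  then have "openin X (sx U)" "sx U \<subseteq> topspace X" using g by (auto simp: openin_topo sx_sub)
  moreover have "{x \<in> topspace X. Some x \<in> U} = sx U" using calculation by (auto simp: sx_def)
  ultimately show "openin X {x \<in> topspace X. Some x \<in> U}" by simp
qed

lemma embedding_Some_topo: "good X F \<Longrightarrow> embedding_map X (topo X F) Some"
  apply (rule injective_open_imp_embedding_map)
  apply (simp add: continuous_Some_topo)
  apply (simp add: open_map_def openin_topo_Some)
  apply simp
  done

lemma compactin_Some_topo:
  "good X F \<Longrightarrow> A \<subseteq> topspace X \<Longrightarrow> compactin (topo X F) (Some ` A) \<longleftrightarrow> compactin X A"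
proof -
  assume g: "good X F" and A: "A \<subseteq> topspace X"
  have h: "homeomorphic_map X (subtopology (topo X F) (Some ` topspace X)) Some"
    using embedding_Some_topo[OF g] by (simp add: embedding_map_def)
  show ?thesis
    using homeomorphic_map_compactness[OF h A] A by (auto simp: compactin_subtopology)
qed

lemma compact_ins_None:
  assumes g: "good X F" and t: "closedin X t" and tp: "\<And>C. C \<in> F \<Longrightarrow> compactin X (C \<inter> t)"
  shows "compactin (topo X F) (insert None (Some ` t))"
  unfolding compactin_def
proof (intro conjI allI impI)
  have ts: "t \<subseteq> topspace X" using t closedin_subset by auto
  then show "insert None (Some ` t) \<subseteq> topspace (topo X F)"
    using g by (auto simp: topspace_topo pt_carrier_def)
  fix \<U> assume U: "(\<forall>x\<in>\<U>. openin (topo X F) x) \<and> insert None (Some ` t) \<subseteq> \<Union>\<U>"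
  then obtain U0 where U0: "U0 \<in> \<U>" "None \<in> U0" by auto
  then have o0: "openin (topo X F) U0" using U by auto
  then have c: "topspace X - sx U0 \<in> F" using g U0 by (simp add: openin_topo)
  let ?c = "topspace X - sx U0"
  have cc: "compactin X (?c \<inter> t)" using tp[OF c] .
  have "?c \<inter> t \<subseteq> topspace X" by auto
  then have "compactin (topo X F) (Some ` (?c \<inter> t))"
    using compactin_Some_topo[OF g] cc by blast
  moreover have "Some ` (?c \<inter> t) \<subseteq> \<Union>\<U>" using U by auto
  ultimately obtain \<V> where V: "finite \<V>" "\<V> \<subseteq> \<U>" "Some ` (?c \<inter> t) \<subseteq> \<Union>\<V>"
    using U unfolding compactin_def by meson
  show "\<exists>\<F>. finite \<F> \<and> \<F> \<subseteq> \<U> \<and> insert None (Some ` t) \<subseteq> \<Union>\<F>"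
  proof (intro exI conjI)
    show "finite (insert U0 \<V>)" using V by simp
    show "insert U0 \<V> \<subseteq> \<U>" using V U0 by simp
    show "insert None (Some ` t) \<subseteq> \<Union> (insert U0 \<V>)"
    proof
      fix p assume p: "p \<in> insert None (Some ` t)"
      show "p \<in> \<Union> (insert U0 \<V>)"
      proof (cases "p = None")
        case True then show ?thesis using U0 by auto
      next
        case False
        then obtain x where x: "p = Some x" "x \<in> t" using p by auto
        show ?thesis
        proof (cases "x \<in> sx U0")
          case True then show ?thesis using x by (auto simp: sx_def)
        next
          case False
          then have "Some x \<in> Some ` (?c \<inter> t)" using x ts by auto
          then show ?thesis using V x by auto
        qed
      qed
    qed
  qed
qed

lemma Hausdorff_topo:
  assumes lc: "locally_compact_space X" and H: "Hausdorff_space X" and f: "fam X F"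
  shows "Hausdorff_space (topo X F)"
proof -
  have g: "good X F" using f by (rule fam_good)
  have sep: "\<exists>U V. openin (topo X F) U \<and> openin (topo X F) V \<and> Some x \<in> U \<and> None \<in> V \<and> disjnt U V"
    if x: "x \<in> topspace X" for x
  proof -
    obtain U K where UK: "openin X U" "compactin X K" "x \<in> U" "U \<subseteq> K"
      using lc x unfolding locally_compact_space_def by blast
    have Kc: "closedin X K" using UK H compactin_imp_closedin by blast
    have KF: "K \<in> F" using fam_compact[OF H f UK(2)] .
    have Ks: "K \<subseteq> topspace X" using Kc closedin_subset by auto
    have o2: "openin (topo X F) (insert None (Some ` (topspace X - K)))"
      using g Kc KF Ks by (auto simp: openin_topo sx_ins pt_carrier_def double_diff)
    show ?thesis
      apply (rule exI[of _ "Some ` U"], rule exI[of _ "insert None (Some ` (topspace X - K))"])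
      using UK o2 g by (auto simp: openin_topo_Some disjnt_def)
  qed
  show ?thesis
    unfolding Hausdorff_space_def
  proof (intro allI impI)
    fix p q assume pq: "p \<in> topspace (topo X F) \<and> q \<in> topspace (topo X F) \<and> p \<noteq> q"
    show "\<exists>U V. openin (topo X F) U \<and> openin (topo X F) V \<and> p \<in> U \<and> q \<in> V \<and> disjnt U V"
    proof (cases p)
      case None
      then obtain y where y: "q = Some y" "y \<in> topspace X" using pq g by (auto simp: topspace_topo pt_carrier_def)
      then show ?thesis using sep[OF y(2)] None by (metis disjnt_sym)
    next
      case (Some x)
      show ?thesis
      proof (cases q)
        case None
        then show ?thesis using sep Some pq g by (auto simp: topspace_topo pt_carrier_def)
      next
        case (Some y)
        then have xy: "x \<in> topspace X" "y \<in> topspace X" "x \<noteq> y"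
          using \<open>p = Some x\<close> pq g by (auto simp: topspace_topo pt_carrier_def)
        then obtain U V where "openin X U" "openin X V" "x \<in> U" "y \<in> V" "disjnt U V"
          using H unfolding Hausdorff_space_def by blast
        then have "openin (topo X F) (Some ` U) \<and> openin (topo X F) (Some ` V) \<and> p \<in> Some ` U \<and> q \<in> Some ` V \<and> disjnt (Some ` U) (Some ` V)"
          using g \<open>p = Some x\<close> Some by (auto simp: openin_topo_Some disjnt_def)
        then show ?thesis by blast
      qed
    qed
  qed
qed



lemma kspace_topo:
  assumes lc: "locally_compact_space X" and H: "Hausdorff_space X" and f: "fam X F"
  shows "k_space (topo X F)"
  unfolding k_space
proof (intro allI impI, elim conjE)
  let ?T = "topo X F"
  have g: "good X F" using f by (rule fam_good)
  have HT: "Hausdorff_space ?T" using Hausdorff_topo[OF lc H f] .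
  fix S assume Ss: "S \<subseteq> topspace ?T" and hK: "\<forall>K. compactin ?T K \<longrightarrow> closedin (subtopology ?T K) (K \<inter> S)"
  have kc: "compactin ?T (K \<inter> S)" if K: "compactin ?T K" for K
  proof -
    have "closedin ?T K" using HT K compactin_imp_closedin by blast
    then have "closedin ?T (K \<inter> S)" using hK K closedin_trans_full by blast
    then show ?thesis using K closed_compactin by blast
  qed
  have Sp: "S \<subseteq> pt_carrier X" using Ss g by (simp add: topspace_topo)
  let ?S' = "sx S"
  have S'X: "?S' \<subseteq> topspace X" using Sp by (rule sx_sub)
  have img: "Some ` A \<inter> S = Some ` (A \<inter> ?S')" for A by (auto simp: sx_def)
  have cl: "closedin X ?S'"
  proof -
    have "k_space X" using lc by (rule locally_compact_imp_k_space)
    moreover have "closedin (subtopology X K') (K' \<inter> ?S')" if K': "compactin X K'" for K'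
    proof -
      have K'X: "K' \<subseteq> topspace X" using K' compactin_subset_topspace by blast
      have "compactin ?T (Some ` K')" using compactin_Some_topo[OF g K'X] K' by simp
      then have "compactin ?T (Some ` (K' \<inter> ?S'))" using kc img by metis
      moreover have "K' \<inter> ?S' \<subseteq> topspace X" using K'X by auto
      ultimately have "compactin X (K' \<inter> ?S')" using compactin_Some_topo[OF g] by blast
      then have "closedin X (K' \<inter> ?S')" using H compactin_imp_closedin by blast
      then show ?thesis by (simp add: closedin_subset_topspace)
    qed
    ultimately show ?thesis using S'X unfolding k_space by blast
  qed
  show "closedin ?T S"
  proof (cases "None \<in> S")
    case True
    have e: "topspace ?T - S = Some ` (topspace X - ?S')"
      using g Sp True by (auto simp: topspace_topo pt_carrier_def sx_def)
    have "openin ?T (Some ` (topspace X - ?S'))" using g cl by (simp add: openin_topo_Some closedin_def)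
    then show ?thesis using Ss e by (simp add: closedin_def)
  next
    case False
    have e: "S = Some ` ?S'" using pt_split[OF Sp False] .
    have "?S' \<in> F"
    proof (rule fam_mem[OF f cl])
      fix t assume t: "t \<in> perp X F"
      have tc: "closedin X t" using t by (rule perp_closed)
      have tp: "\<And>C. C \<in> F \<Longrightarrow> compactin X (C \<inter> t)" using t by (simp add: perp_def)
      have "compactin ?T (insert None (Some ` t))" using compact_ins_None[OF g tc tp] .
      then have "compactin ?T (insert None (Some ` t) \<inter> S)" by (rule kc)
      moreover have "insert None (Some ` t) \<inter> S = Some ` (t \<inter> ?S')" using False by (auto simp: sx_def)
      ultimately have "compactin ?T (Some ` (t \<inter> ?S'))" by simp
      moreover have "t \<inter> ?S' \<subseteq> topspace X" using S'X by auto
      ultimately show "compactin X (t \<inter> ?S')" using compactin_Some_topo[OF g] by blast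
    qed
    then show ?thesis using e closedin_topo_Some[OF g S'X] by simp
  qed
qed

lemma pe_topo:
  assumes lc: "locally_compact_space X" and H: "Hausdorff_space X" and f: "fam X F"
  shows "pointed_extension X (topo X F)"
  unfolding pointed_extension_def
proof (intro conjI)
  have g: "good X F" using f by (rule fam_good)
  show "topspace (topo X F) = pt_carrier X" using g by (rule topspace_topo)
  show "Hausdorff_space (topo X F)" using Hausdorff_topo[OF lc H f] .
  show "k_space (topo X F)" using kspace_topo[OF lc H f] .
  show "embedding_map X (topo X F) Some" using g by (rule embedding_Some_topo)
  show "continuous_map (plus_top X) (topo X F) (\<lambda>p. p)"
    unfolding continuous_map_def plus_top_topo
  proof (intro conjI allI impI)
    show "(\<lambda>p. p) \<in> topspace (topo X (Collect (closedin X))) \<rightarrow> topspace (topo X F)"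
      using topspace_topo[OF g] topspace_topo[OF good_closed_all[of X]] by simp
    fix U assume U: "openin (topo X F) U"
    then have "U \<subseteq> pt_carrier X" "openin X (sx U)" using g by (auto simp: openin_topo)
    moreover have "{x \<in> topspace (topo X (Collect (closedin X))). x \<in> U} = U"
      using calculation topspace_topo[OF good_closed_all[of X]] by auto
    ultimately show "openin (topo X (Collect (closedin X))) {x \<in> topspace (topo X (Collect (closedin X))). x \<in> U}"
      using openin_topo[OF good_closed_all[of X]] by (simp add: closedin_diff)
  qed
qed

definition Phi :: "'a topology \<Rightarrow> 'a option topology \<Rightarrow> 'a set set" where
  "Phi X T = {C. C \<subseteq> topspace X \<and> closedin T (Some ` C)}"

lemma Phi_topo: "fam X F \<Longrightarrow> Phi X (topo X F) = F"
proof -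
  assume f: "fam X F"
  have g: "good X F" using f by (rule fam_good)
  have "C \<subseteq> topspace X" if "C \<in> F" for C using fam_closed[OF f that] closedin_subset by blast
  then show ?thesis using closedin_topo_Some[OF g] by (auto simp: Phi_def)
qed



locale PE =
  fixes X :: "'a topology" and T :: "'a option topology"
  assumes lc: "locally_compact_space X" and H: "Hausdorff_space X"
    and pe: "pointed_extension X T"
begin

lemma ts: "topspace T = pt_carrier X" using pe by (simp add: pointed_extension_def)
lemma HT: "Hausdorff_space T" using pe by (simp add: pointed_extension_def)
lemma kT: "k_space T" using pe by (simp add: pointed_extension_def)
lemma hm: "homeomorphic_map X (subtopology T (Some ` topspace X)) Some"
  using pe by (simp add: pointed_extension_def embedding_map_def)

lemma openSX: "openin T (Some ` topspace X)"
proof -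
  have e: "Some ` topspace X = topspace T - {None}" unfolding ts pt_carrier_def by auto
  have "None \<in> topspace T" unfolding ts pt_carrier_def by simp
  then have "closedin T {None}" by (rule closedin_Hausdorff_singleton[OF HT])
  then have "openin T (topspace T - {None})" by (rule openin_diff[OF openin_topspace])
  then show ?thesis using e by simp
qed

lemma openin_Some_pe: "A \<subseteq> topspace X \<Longrightarrow> openin T (Some ` A) \<longleftrightarrow> openin X A"
proof -
  assume A: "A \<subseteq> topspace X"
  have "openin (subtopology T (Some ` topspace X)) (Some ` A) \<longleftrightarrow> openin X A"
    by (rule homeomorphic_map_openness[OF hm A])
  moreover have "openin (subtopology T (Some ` topspace X)) (Some ` A) \<longleftrightarrow> openin T (Some ` A)"
    using openin_open_subtopology[OF openSX] A by auto
  ultimately show ?thesis by simp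
qed

lemma compactin_Some_pe: "A \<subseteq> topspace X \<Longrightarrow> compactin T (Some ` A) \<longleftrightarrow> compactin X A"
proof -
  assume A: "A \<subseteq> topspace X"
  have "compactin (subtopology T (Some ` topspace X)) (Some ` A) \<longleftrightarrow> compactin X A"
    by (rule homeomorphic_map_compactness[OF hm A])
  then show ?thesis using A by (auto simp: compactin_subtopology)
qed

lemma closedin_Some_pe: "A \<subseteq> topspace X \<Longrightarrow> closedin T (Some ` A) \<Longrightarrow> closedin X A"
proof -
  assume A: "A \<subseteq> topspace X" and c: "closedin T (Some ` A)"
  then have "closedin (subtopology T (Some ` topspace X)) (Some ` A)"
    by (simp add: closedin_subset_topspace image_mono)
  then show ?thesis using homeomorphic_map_closedness[OF hm A] by simp
qed

lemma contSome: "continuous_map X T Some"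
  using homeomorphic_imp_continuous_map[OF hm] continuous_map_in_subtopology by blast

lemma Phi_closed: "C \<in> Phi X T \<Longrightarrow> closedin X C"
  using closedin_Some_pe by (auto simp: Phi_def)

lemma fam_Phi: "fam X (Phi X T)"
proof -
  let ?P = "Phi X T"
  have Psub: "?P \<subseteq> Collect (closedin X)" using Phi_closed by blast
  have "perp X (perp X ?P) \<subseteq> ?P"
  proof
    fix z assume z: "z \<in> perp X (perp X ?P)"
    have zc: "closedin X z" using z by (rule perp_closed)
    have zp: "\<And>S. S \<in> perp X ?P \<Longrightarrow> compactin X (S \<inter> z)" using z by (simp add: perp_def)
    have zX: "z \<subseteq> topspace X" using zc closedin_subset by blast
    have "closedin T (Some ` z)"
      using kT unfolding k_space
    proof (elim allE impE)
      show "Some ` z \<subseteq> topspace T \<and> (\<forall>K. compactin T K \<longrightarrow> closedin (subtopology T K) (K \<inter> Some ` z))"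
      proof (intro conjI allI impI)
        show "Some ` z \<subseteq> topspace T" using zX ts by (auto simp: pt_carrier_def)
        fix K assume K: "compactin T K"
        have Kc: "closedin T K" using HT K compactin_imp_closedin by blast
        have Kp: "K \<subseteq> pt_carrier X" using K ts compactin_subset_topspace by metis
        have "closedin T (K \<inter> Some ` z)"
        proof (cases "None \<in> K")
          case False
          have eK: "K = Some ` sx K" using pt_split[OF Kp False] .
          have sX: "sx K \<subseteq> topspace X" using Kp by (rule sx_sub)
          have "compactin X (sx K)" using K eK compactin_Some_pe[OF sX] by simp
          then have "compactin X (sx K \<inter> z)" using zc compact_Int_closedin by blast
          moreover have "K \<inter> Some ` z = Some ` (sx K \<inter> z)" using eK by (auto simp: sx_def)
          moreover have "sx K \<inter> z \<subseteq> topspace X" using sX by auto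
          ultimately have "compactin T (K \<inter> Some ` z)" using compactin_Some_pe by simp
          then show ?thesis using HT compactin_imp_closedin by blast
        next
          case True
          have sX: "sx K \<subseteq> topspace X" using Kp by (rule sx_sub)
          have "closedin (subtopology T (Some ` topspace X)) (Some ` topspace X \<inter> K)"
            using Kc by (rule closedin_subtopology_Int_closed)
          moreover have "Some ` topspace X \<inter> K = Some ` sx K" using Kp by (auto simp: sx_def pt_carrier_def)
          ultimately have "closedin X (sx K)" using homeomorphic_map_closedness[OF hm sX] by simp
          moreover have "compactin X (C \<inter> sx K)" if C: "C \<in> ?P" for C
          proof -
            have CX: "C \<subseteq> topspace X" and Cc: "closedin T (Some ` C)" using C by (auto simp: Phi_def)
            have "closedin T (Some ` C \<inter> K)" using Cc Kc by (rule closedin_Int)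
            then have "compactin T (Some ` C \<inter> K)" using K closed_compactin by blast
            moreover have "Some ` C \<inter> K = Some ` (C \<inter> sx K)" by (auto simp: sx_def)
            moreover have "C \<inter> sx K \<subseteq> topspace X" using CX by auto
            ultimately show ?thesis using compactin_Some_pe by simp
          qed
          ultimately have "sx K \<in> perp X ?P" by (simp add: perp_def)
          then have "compactin X (sx K \<inter> z)" by (rule zp)
          moreover have "K \<inter> Some ` z = Some ` (sx K \<inter> z)" by (auto simp: sx_def)
          moreover have "sx K \<inter> z \<subseteq> topspace X" using sX by auto
          ultimately have "compactin T (K \<inter> Some ` z)" using compactin_Some_pe by simp
          then show ?thesis using HT compactin_imp_closedin by blast
        qed
        then show "closedin (subtopology T K) (K \<inter> Some ` z)"
          by (simp add: closedin_subset_topspace)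
      qed
    qed
    then show "z \<in> ?P" using zX by (simp add: Phi_def)
  qed
  moreover have "?P \<subseteq> perp X (perp X ?P)" using Psub by (rule pp_sup)
  ultimately show ?thesis unfolding fam_def by blast
qed

lemma T_eq: "T = topo X (Phi X T)"
proof -
  have g: "good X (Phi X T)" using fam_Phi by (rule fam_good)
  show ?thesis
    unfolding topology_eq
  proof (intro allI iffI)
    fix U assume U: "openin T U"
    have Up: "U \<subseteq> pt_carrier X" using U ts openin_subset by metis
    have sX: "sx U \<subseteq> topspace X" using Up by (rule sx_sub)
    have "openin X {x \<in> topspace X. Some x \<in> U}" using contSome U openin_continuous_map_preimage by blast
    moreover have "{x \<in> topspace X. Some x \<in> U} = sx U" using sX by (auto simp: sx_def)
    ultimately have o: "openin X (sx U)" by simp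
    have "topspace X - sx U \<in> Phi X T" if "None \<in> U"
    proof -
      have "Some ` (topspace X - sx U) = topspace T - U" using Up that ts by (auto simp: sx_def pt_carrier_def)
      moreover have "closedin T (topspace T - U)" using U by (simp add: closedin_diff)
      ultimately show ?thesis by (simp add: Phi_def)
    qed
    then show "openin (topo X (Phi X T)) U" using Up o by (simp add: openin_topo[OF g])
  next
    fix U assume "openin (topo X (Phi X T)) U"
    then have Up: "U \<subseteq> pt_carrier X" and o: "openin X (sx U)"
      and n: "None \<in> U \<Longrightarrow> topspace X - sx U \<in> Phi X T" by (auto simp: openin_topo[OF g])
    have sX: "sx U \<subseteq> topspace X" using Up by (rule sx_sub)
    show "openin T U"
    proof (cases "None \<in> U")
      case False
      then show ?thesis using pt_split[OF Up False] openin_Some_pe[OF sX] o by simp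
    next
      case True
      have "closedin T (Some ` (topspace X - sx U))" using n[OF True] by (simp add: Phi_def)
      moreover have "U = topspace T - Some ` (topspace X - sx U)" using Up True ts by (auto simp: sx_def pt_carrier_def)
      ultimately show ?thesis by (metis openin_diff openin_topspace)
    qed
  qed
qed

end



definition R :: "'a topology \<Rightarrow> 'a option \<Rightarrow> 'a option" where
  "R X = restrict (\<lambda>p. p) (pt_carrier X)"

lemma cob_Point: "T \<in> cob (Point X) \<longleftrightarrow> pointed_extension X T"
  by (simp add: Point_def)

lemma chom_Point: "chom (Point X) T T' = {f. continuous_map T T' f \<and>
                         (\<forall>p\<in>topspace (plus_top X). f p = p) \<and>
                         (\<forall>p. p \<notin> topspace T \<longrightarrow> f p = undefined)}"
  by (simp add: Point_def)

lemma cid_Point: "cid (Point X) T = restrict (\<lambda>p. p) (topspace T)"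
  by (simp add: Point_def)

lemma ccomp_Point: "ccomp (Point X) g f = restrict (g \<circ> f) (pt_carrier X)"
  by (simp add: Point_def)

lemma RR: "ccomp (Point X) (R X) (R X) = R X"
  unfolding ccomp_Point R_def by (auto simp: restrict_def)

lemma topspace_plus: "topspace (plus_top X) = pt_carrier X"
  unfolding plus_top_topo by (rule topspace_topo[OF good_closed_all])

context
  fixes X :: "'a topology"
  assumes lc: "locally_compact_space X" and H: "Hausdorff_space X"
begin

lemma objPE: "T \<in> cob (Point X) \<Longrightarrow> PE X T"
  unfolding PE_def using lc H by (simp add: cob_Point)

lemma obj_topo: "fam X F \<Longrightarrow> topo X F \<in> cob (Point X)"
  using pe_topo[OF lc H] by (simp add: cob_Point)

lemma cont_iff:
  assumes T: "T \<in> cob (Point X)" and T': "T' \<in> cob (Point X)"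
  shows "continuous_map T T' (\<lambda>p. p) \<longleftrightarrow> Phi X T' \<subseteq> Phi X T"
proof
  interpret A: PE X T using objPE[OF T] .
  interpret B: PE X T' using objPE[OF T'] .
  assume c: "continuous_map T T' (\<lambda>p. p)"
  show "Phi X T' \<subseteq> Phi X T"
  proof
    fix C assume C: "C \<in> Phi X T'"
    then have CX: "C \<subseteq> topspace X" and cC: "closedin T' (Some ` C)" by (auto simp: Phi_def)
    have "closedin T {x \<in> topspace T. x \<in> Some ` C}" using closedin_continuous_map_preimage[OF c cC] .
    moreover have "{x \<in> topspace T. x \<in> Some ` C} = Some ` C" using CX A.ts by (auto simp: pt_carrier_def)
    ultimately show "C \<in> Phi X T" using CX by (simp add: Phi_def)
  qed
next
  interpret A: PE X T using objPE[OF T] .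
  interpret B: PE X T' using objPE[OF T'] .
  assume s: "Phi X T' \<subseteq> Phi X T"
  have gA: "good X (Phi X T)" using A.fam_Phi by (rule fam_good)
  have gB: "good X (Phi X T')" using B.fam_Phi by (rule fam_good)
  show "continuous_map T T' (\<lambda>p. p)"
    unfolding continuous_map_def
  proof (intro conjI allI impI)
    show "(\<lambda>p. p) \<in> topspace T \<rightarrow> topspace T'" using A.ts B.ts by simp
    fix U assume U: "openin T' U"
    then have "openin (topo X (Phi X T')) U" using B.T_eq by simp
    then have "U \<subseteq> pt_carrier X \<and> openin X (sx U) \<and> (None \<in> U \<longrightarrow> topspace X - sx U \<in> Phi X T')"
      by (simp add: openin_topo[OF gB])
    then have "openin (topo X (Phi X T)) U" using s by (auto simp: openin_topo[OF gA])
    then have "openin T U" using A.T_eq by simp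
    moreover have "{x \<in> topspace T. x \<in> U} = U" using U A.ts B.ts openin_subset by blast
    ultimately show "openin T {x \<in> topspace T. x \<in> U}" by simp
  qed
qed

lemma hom_char:
  assumes T: "T \<in> cob (Point X)" and T': "T' \<in> cob (Point X)"
  shows "f \<in> chom (Point X) T T' \<longleftrightarrow> f = R X \<and> Phi X T' \<subseteq> Phi X T"
proof -
  interpret A: PE X T using objPE[OF T] .
  have e1: "(\<forall>p\<in>topspace (plus_top X). f p = p) \<and> (\<forall>p. p \<notin> topspace T \<longrightarrow> f p = undefined)
      \<longleftrightarrow> f = R X"
    unfolding topspace_plus A.ts R_def by (auto simp: restrict_def)
  have e2: "continuous_map T T' (R X) \<longleftrightarrow> continuous_map T T' (\<lambda>p. p)"
  proof
    assume "continuous_map T T' (R X)"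
    then show "continuous_map T T' (\<lambda>p. p)" by (rule continuous_map_eq) (simp add: R_def A.ts)
  next
    assume "continuous_map T T' (\<lambda>p. p)"
    then show "continuous_map T T' (R X)" by (rule continuous_map_eq) (simp add: R_def A.ts)
  qed
  show ?thesis
    unfolding chom_Point using e1 e2 cont_iff[OF T T'] by auto
qed

lemma cid_R: "T \<in> cob (Point X) \<Longrightarrow> cid (Point X) T = R X"
proof -
  assume T: "T \<in> cob (Point X)"
  interpret A: PE X T using objPE[OF T] .
  show ?thesis unfolding cid_Point A.ts R_def ..
qed

lemma Phi_inj: "T \<in> cob (Point X) \<Longrightarrow> T' \<in> cob (Point X) \<Longrightarrow> Phi X T = Phi X T' \<Longrightarrow> T = T'"
proof -
  assume T: "T \<in> cob (Point X)" and T': "T' \<in> cob (Point X)" and e: "Phi X T = Phi X T'"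
  interpret A: PE X T using objPE[OF T] .
  interpret B: PE X T' using objPE[OF T'] .
  show ?thesis using A.T_eq B.T_eq e by metis
qed

lemma Phi_fam: "T \<in> cob (Point X) \<Longrightarrow> fam X (Phi X T)"
proof -
  assume T: "T \<in> cob (Point X)"
  interpret A: PE X T using objPE[OF T] .
  show ?thesis by (rule A.fam_Phi)
qed

lemma category_Point: "category (Point X)"
  unfolding category_def
  by (auto simp: hom_char cid_R RR)

lemma poset_Point: "is_poset_cat (Point X)"
  unfolding is_poset_cat_def
  by (auto simp: hom_char intro: Phi_inj)

end



lemma pp_mono: "A \<subseteq> B \<Longrightarrow> perp X (perp X A) \<subseteq> perp X (perp X B)"
  by (intro perp_anti)

lemma frame:
  assumes A: "A \<subseteq> Collect (closedin X)" and B: "\<And>j. j \<in> I \<Longrightarrow> fam X (B j)"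
    and zc: "closedin X z" and z: "\<And>j. j \<in> I \<Longrightarrow> z \<in> perp X (perp X (A \<union> B j))"
  shows "z \<in> perp X (perp X (A \<union> {C. closedin X C \<and> (\<forall>j\<in>I. C \<in> B j)}))"
proof -
  let ?G = "{C. closedin X C \<and> (\<forall>j\<in>I. C \<in> B j)}"
  have "compactin X (S \<inter> z)" if S: "S \<in> perp X (A \<union> ?G)" for S
  proof -
    have Sc: "closedin X S" using S by (rule perp_closed)
    have SA: "\<And>C. C \<in> A \<union> ?G \<Longrightarrow> compactin X (C \<inter> S)" using S by (simp add: perp_def)
    let ?w = "z \<inter> S"
    have wc: "closedin X ?w" using zc Sc by (rule closedin_Int)
    have "?w \<in> B j" if j: "j \<in> I" for j
    proof (rule fam_mem[OF B[OF j] wc])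
      fix u assume u: "u \<in> perp X (B j)"
      have uc: "closedin X u" using u by (rule perp_closed)
      have uB: "\<And>C. C \<in> B j \<Longrightarrow> compactin X (C \<inter> u)" using u by (simp add: perp_def)
      have "u \<inter> S \<in> perp X (A \<union> B j)"
        unfolding perp_def
      proof (intro CollectI conjI ballI)
        show "closedin X (u \<inter> S)" using uc Sc by (rule closedin_Int)
        fix C assume C: "C \<in> A \<union> B j"
        have Cc: "closedin X C" using C A fam_closed[OF B[OF j]] by blast
        have Cus: "closedin X (C \<inter> (u \<inter> S))" using Cc uc Sc by (intro closedin_Int)
        show "compactin X (C \<inter> (u \<inter> S))"
        proof (cases "C \<in> A")
          case True
          then have "compactin X (C \<inter> S)" using SA by blast
          then show ?thesis using Cus closed_compactin[of X "C \<inter> S" "C \<inter> (u \<inter> S)"] by blast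
        next
          case False
          then have "C \<in> B j" using C by blast
          then have "compactin X (C \<inter> u)" using uB by blast
          then show ?thesis using Cus closed_compactin[of X "C \<inter> u" "C \<inter> (u \<inter> S)"] by blast
        qed
      qed
      then have "compactin X ((u \<inter> S) \<inter> z)" using z[OF j] by (simp add: perp_def)
      moreover have "(u \<inter> S) \<inter> z = u \<inter> ?w" by blast
      ultimately show "compactin X (u \<inter> ?w)" by simp
    qed
    then have "?w \<in> ?G" using wc by blast
    then have "compactin X (?w \<inter> S)" using SA by blast
    moreover have "?w \<inter> S = S \<inter> z" by blast
    ultimately show ?thesis by simp
  qed
  then show ?thesis using zc by (simp add: perp_def)
qed

context
  fixes X :: "'a topology"
  assumes lc: "locally_compact_space X" and H: "Hausdorff_space X"
begin

lemma Phi_closedset: "T \<in> cob (Point X) \<Longrightarrow> Phi X T \<subseteq> Collect (closedin X)"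
  using Phi_fam[OF lc H] fam_sub by blast

lemma Phi_topo': "fam X F \<Longrightarrow> Phi X (topo X F) = F" by (rule Phi_topo)

lemma colim_exists:
  assumes Fn: "is_functor J (Point X) Fo Fa"
  shows "\<exists>L lam. is_colimit (Point X) J Fo Fa L lam"
proof -
  have Fo: "\<And>j. j \<in> cob J \<Longrightarrow> Fo j \<in> cob (Point X)" using Fn by (simp add: is_functor_def)
  have Fa: "\<And>i j f. i \<in> cob J \<Longrightarrow> j \<in> cob J \<Longrightarrow> f \<in> chom J i j \<Longrightarrow> Fa i j f \<in> chom (Point X) (Fo i) (Fo j)"
    using Fn by (simp add: is_functor_def)
  let ?G = "{C. closedin X C \<and> (\<forall>j\<in>cob J. C \<in> Phi X (Fo j))}"
  have fG: "fam X ?G" by (rule fam_Inter) (rule Phi_fam[OF lc H Fo])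
  let ?L = "topo X ?G"
  have L: "?L \<in> cob (Point X)" using obj_topo[OF lc H fG] .
  have PL: "Phi X ?L = ?G" using Phi_topo[OF fG] .
  have "is_colimit (Point X) J Fo Fa ?L (\<lambda>j. R X)"
    unfolding is_colimit_def is_cocone_def
  proof (intro conjI allI impI ballI L)
    fix j assume j: "j \<in> cob J"
    show "R X \<in> chom (Point X) (Fo j) ?L" using hom_char[OF lc H Fo[OF j] L] PL j by auto
  next
    fix i j f assume i: "i \<in> cob J" and j: "j \<in> cob J" and f: "f \<in> chom J i j"
    have "Fa i j f = R X" using Fa[OF i j f] hom_char[OF lc H Fo[OF i] Fo[OF j]] by blast
    then show "ccomp (Point X) (R X) (Fa i j f) = R X" by (simp add: RR)
  next
    fix L' mu
    assume c: "L' \<in> cob (Point X) \<and> (\<forall>j\<in>cob J. mu j \<in> chom (Point X) (Fo j) L') \<and>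
       (\<forall>i\<in>cob J. \<forall>j\<in>cob J. \<forall>f\<in>chom J i j. ccomp (Point X) (mu j) (Fa i j f) = mu i)"
    then have L': "L' \<in> cob (Point X)" by blast
    have mu: "\<And>j. j \<in> cob J \<Longrightarrow> mu j = R X \<and> Phi X L' \<subseteq> Phi X (Fo j)"
      using c hom_char[OF lc H Fo L'] by blast
    have "Phi X L' \<subseteq> ?G" using mu Phi_closedset[OF L'] by blast
    then have R: "R X \<in> chom (Point X) ?L L'" using hom_char[OF lc H L L'] PL by simp
    show "\<exists>!u. u \<in> chom (Point X) ?L L' \<and> (\<forall>j\<in>cob J. ccomp (Point X) u (R X) = mu j)"
    proof (rule ex1I[of _ "R X"])
      show "R X \<in> chom (Point X) ?L L' \<and> (\<forall>j\<in>cob J. ccomp (Point X) (R X) (R X) = mu j)"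
        using R mu by (simp add: RR)
      fix u assume "u \<in> chom (Point X) ?L L' \<and> (\<forall>j\<in>cob J. ccomp (Point X) u (R X) = mu j)"
      then show "u = R X" using hom_char[OF lc H L L'] by blast
    qed
  qed
  then show ?thesis by blast
qed

lemma lim_exists:
  assumes Fn: "is_functor J (Point X) Fo Fa"
  shows "\<exists>L lam. is_limit (Point X) J Fo Fa L lam"
proof -
  have Fo: "\<And>j. j \<in> cob J \<Longrightarrow> Fo j \<in> cob (Point X)" using Fn by (simp add: is_functor_def)
  have Fa: "\<And>i j f. i \<in> cob J \<Longrightarrow> j \<in> cob J \<Longrightarrow> f \<in> chom J i j \<Longrightarrow> Fa i j f \<in> chom (Point X) (Fo i) (Fo j)"
    using Fn by (simp add: is_functor_def)
  let ?U = "\<Union>j\<in>cob J. Phi X (Fo j)"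
  have Uc: "?U \<subseteq> Collect (closedin X)" using Phi_closedset[OF Fo] by blast
  let ?G = "perp X (perp X ?U)"
  have fG: "fam X ?G" using Uc by (rule fam_pp)
  let ?L = "topo X ?G"
  have L: "?L \<in> cob (Point X)" using obj_topo[OF lc H fG] .
  have PL: "Phi X ?L = ?G" using Phi_topo[OF fG] .
  have UG: "?U \<subseteq> ?G" using Uc by (rule pp_sup)
  have "is_limit (Point X) J Fo Fa ?L (\<lambda>j. R X)"
    unfolding is_limit_def is_cone_def
  proof (intro conjI allI impI ballI L)
    fix j assume j: "j \<in> cob J"
    show "R X \<in> chom (Point X) ?L (Fo j)" using hom_char[OF lc H L Fo[OF j]] PL j UG by auto
  next
    fix i j f assume i: "i \<in> cob J" and j: "j \<in> cob J" and f: "f \<in> chom J i j"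
    have "Fa i j f = R X" using Fa[OF i j f] hom_char[OF lc H Fo[OF i] Fo[OF j]] by blast
    then show "ccomp (Point X) (Fa i j f) (R X) = R X" by (simp add: RR)
  next
    fix L' mu
    assume c: "L' \<in> cob (Point X) \<and> (\<forall>j\<in>cob J. mu j \<in> chom (Point X) L' (Fo j)) \<and>
       (\<forall>i\<in>cob J. \<forall>j\<in>cob J. \<forall>f\<in>chom J i j. ccomp (Point X) (Fa i j f) (mu i) = mu j)"
    then have L': "L' \<in> cob (Point X)" by blast
    have mu: "\<And>j. j \<in> cob J \<Longrightarrow> mu j = R X \<and> Phi X (Fo j) \<subseteq> Phi X L'"
      using c hom_char[OF lc H L' Fo] by blast
    have "?U \<subseteq> Phi X L'" using mu by blast
    then have "?G \<subseteq> perp X (perp X (Phi X L'))" by (rule pp_mono)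
    then have "?G \<subseteq> Phi X L'" using Phi_fam[OF lc H L'] by (simp add: fam_def)
    then have R: "R X \<in> chom (Point X) L' ?L" using hom_char[OF lc H L' L] PL by simp
    show "\<exists>!u. u \<in> chom (Point X) L' ?L \<and> (\<forall>j\<in>cob J. ccomp (Point X) (R X) u = mu j)"
    proof (rule ex1I[of _ "R X"])
      show "R X \<in> chom (Point X) L' ?L \<and> (\<forall>j\<in>cob J. ccomp (Point X) (R X) (R X) = mu j)"
        using R mu by (simp add: RR)
      fix u assume "u \<in> chom (Point X) L' ?L \<and> (\<forall>j\<in>cob J. ccomp (Point X) (R X) u = mu j)"
      then show "u = R X" using hom_char[OF lc H L' L] by blast
    qed
  qed
  then show ?thesis by blast
qed

lemma initial_exists: "\<exists>I. initial_object (Point X) I"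
proof -
  have f: "fam X (Collect (closedin X))" by (rule fam_closed_all)
  let ?I = "topo X (Collect (closedin X))"
  have I: "?I \<in> cob (Point X)" using obj_topo[OF lc H f] .
  have PI: "Phi X ?I = Collect (closedin X)" using Phi_topo[OF f] .
  have "initial_object (Point X) ?I"
    unfolding initial_object_def
  proof (intro conjI ballI I)
    fix A assume A: "A \<in> cob (Point X)"
    show "\<exists>!f. f \<in> chom (Point X) ?I A"
      using hom_char[OF lc H I A] PI Phi_closedset[OF A] by auto
  qed
  then show ?thesis by blast
qed

lemma terminal_exists: "\<exists>T. terminal_object (Point X) T"
proof -
  have f: "fam X (perp X (perp X {}))" by (rule fam_pp) simp
  let ?T = "topo X (perp X (perp X {}))"
  have T: "?T \<in> cob (Point X)" using obj_topo[OF lc H f] .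
  have PT: "Phi X ?T = perp X (perp X {})" using Phi_topo[OF f] .
  have "terminal_object (Point X) ?T"
    unfolding terminal_object_def
  proof (intro conjI ballI T)
    fix A assume A: "A \<in> cob (Point X)"
    have "perp X (perp X {}) \<subseteq> perp X (perp X (Phi X A))" by (rule pp_mono) simp
    then have "Phi X ?T \<subseteq> Phi X A" using PT Phi_fam[OF lc H A] by (simp add: fam_def)
    then show "\<exists>!f. f \<in> chom (Point X) A ?T"
      using hom_char[OF lc H A T] by auto
  qed
  then show ?thesis by blast
qed

end



context
  fixes X :: "'a topology"
  assumes lc: "locally_compact_space X" and H: "Hausdorff_space X"
begin

lemma prod_char:
  assumes Y: "Y \<in> cob (Point X)" and L: "L \<in> cob (Point X)" and p: "is_product (Point X) Y L P p1 p2"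
  shows "P \<in> cob (Point X) \<and> p1 = R X \<and> p2 = R X \<and> Phi X P = perp X (perp X (Phi X Y \<union> Phi X L))"
proof -
  have P: "P \<in> cob (Point X)" using p by (simp add: is_product_def)
  have h1: "p1 = R X \<and> Phi X Y \<subseteq> Phi X P" using p hom_char[OF lc H P Y] by (simp add: is_product_def)
  have h2: "p2 = R X \<and> Phi X L \<subseteq> Phi X P" using p hom_char[OF lc H P L] by (simp add: is_product_def)
  have Uc: "Phi X Y \<union> Phi X L \<subseteq> Collect (closedin X)" using Phi_closedset[OF lc H Y] Phi_closedset[OF lc H L] by blast
  let ?G = "perp X (perp X (Phi X Y \<union> Phi X L))"
  have fG: "fam X ?G" using Uc by (rule fam_pp)
  have sup: "Phi X Y \<union> Phi X L \<subseteq> ?G" using Uc by (rule pp_sup)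
  let ?Z = "topo X ?G"
  have Z: "?Z \<in> cob (Point X)" using obj_topo[OF lc H fG] .
  have PZ: "Phi X ?Z = ?G" using Phi_topo[OF fG] .
  have "R X \<in> chom (Point X) ?Z Y" using hom_char[OF lc H Z Y] PZ sup by auto
  moreover have "R X \<in> chom (Point X) ?Z L" using hom_char[OF lc H Z L] PZ sup by auto
  ultimately obtain u where "u \<in> chom (Point X) ?Z P" using p Z unfolding is_product_def by blast
  then have le: "Phi X P \<subseteq> ?G" using hom_char[OF lc H Z P] PZ by simp
  have "?G \<subseteq> perp X (perp X (Phi X P))" using h1 h2 by (intro pp_mono) blast
  then have "?G \<subseteq> Phi X P" using Phi_fam[OF lc H P] by (simp add: fam_def)
  then show ?thesis using le P h1 h2 by blast
qed

lemma colim_char: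
  assumes Fn: "is_functor J (Point X) Fo Fa" and c: "is_colimit (Point X) J Fo Fa L lam"
  shows "L \<in> cob (Point X) \<and> (\<forall>j\<in>cob J. lam j = R X \<and> Phi X L \<subseteq> Phi X (Fo j)) \<and>
         {C. closedin X C \<and> (\<forall>j\<in>cob J. C \<in> Phi X (Fo j))} \<subseteq> Phi X L"
proof -
  have Fo: "\<And>j. j \<in> cob J \<Longrightarrow> Fo j \<in> cob (Point X)" using Fn by (simp add: is_functor_def)
  have Fa: "\<And>i j f. i \<in> cob J \<Longrightarrow> j \<in> cob J \<Longrightarrow> f \<in> chom J i j \<Longrightarrow> Fa i j f \<in> chom (Point X) (Fo i) (Fo j)"
    using Fn by (simp add: is_functor_def)
  have L: "L \<in> cob (Point X)" using c by (simp add: is_colimit_def is_cocone_def)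
  have lam: "\<forall>j\<in>cob J. lam j = R X \<and> Phi X L \<subseteq> Phi X (Fo j)"
    using c hom_char[OF lc H Fo L] by (simp add: is_colimit_def is_cocone_def)
  let ?G = "{C. closedin X C \<and> (\<forall>j\<in>cob J. C \<in> Phi X (Fo j))}"
  have fG: "fam X ?G" by (rule fam_Inter) (rule Phi_fam[OF lc H Fo])
  let ?L = "topo X ?G"
  have L0: "?L \<in> cob (Point X)" using obj_topo[OF lc H fG] .
  have PL: "Phi X ?L = ?G" using Phi_topo[OF fG] .
  have "is_cocone (Point X) J Fo Fa ?L (\<lambda>j. R X)"
    unfolding is_cocone_def
  proof (intro conjI ballI L0)
    fix j assume j: "j \<in> cob J"
    show "R X \<in> chom (Point X) (Fo j) ?L" using hom_char[OF lc H Fo[OF j] L0] PL j by auto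
  next
    fix i j f assume i: "i \<in> cob J" and j: "j \<in> cob J" and f: "f \<in> chom J i j"
    have "Fa i j f = R X" using Fa[OF i j f] hom_char[OF lc H Fo[OF i] Fo[OF j]] by blast
    then show "ccomp (Point X) (R X) (Fa i j f) = R X" by (simp add: RR)
  qed
  then obtain u where "u \<in> chom (Point X) L ?L" using c unfolding is_colimit_def by blast
  then have "?G \<subseteq> Phi X L" using hom_char[OF lc H L L0] PL by simp
  then show ?thesis using L lam by blast
qed

lemma distr_core:
  assumes Y: "Y \<in> cob (Point X)" and Fn: "is_functor J (Point X) Do Da"
    and c: "is_colimit (Point X) J Do Da L lam"
    and p: "is_product (Point X) Y L P p1 p2"
    and q: "\<forall>j\<in>cob J. is_product (Point X) Y (Do j) (Q j) (q1 j) (q2 j)"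
    and QaR: "\<And>i j f. i \<in> cob J \<Longrightarrow> j \<in> cob J \<Longrightarrow> f \<in> chom J i j \<Longrightarrow> Qa i j f = R X"
    and lamR: "\<And>j. j \<in> cob J \<Longrightarrow> lamQ j = R X"
    and PQ: "\<And>j. j \<in> cob J \<Longrightarrow> Phi X P \<subseteq> Phi X (Q j)"
  shows "is_colimit (Point X) J Q Qa P lamQ"
proof -
  have Do: "\<And>j. j \<in> cob J \<Longrightarrow> Do j \<in> cob (Point X)" using Fn by (simp add: is_functor_def)
  have cc: "L \<in> cob (Point X) \<and> (\<forall>j\<in>cob J. lam j = R X \<and> Phi X L \<subseteq> Phi X (Do j)) \<and>
         {C. closedin X C \<and> (\<forall>j\<in>cob J. C \<in> Phi X (Do j))} \<subseteq> Phi X L"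
    using colim_char[OF Fn c] .
  then have L: "L \<in> cob (Point X)" by blast
  have pc: "P \<in> cob (Point X) \<and> p1 = R X \<and> p2 = R X \<and> Phi X P = perp X (perp X (Phi X Y \<union> Phi X L))"
    using prod_char[OF Y L p] .
  then have P: "P \<in> cob (Point X)" by blast
  have qc: "\<And>j. j \<in> cob J \<Longrightarrow> Q j \<in> cob (Point X) \<and> q1 j = R X \<and> q2 j = R X \<and>
      Phi X (Q j) = perp X (perp X (Phi X Y \<union> Phi X (Do j)))"
    using prod_char[OF Y Do] q by blast
  show ?thesis
    unfolding is_colimit_def is_cocone_def
  proof (intro conjI ballI allI impI P)
    fix j assume j: "j \<in> cob J"
    have Qj: "Q j \<in> cob (Point X)" using qc[OF j] by blast
    show "lamQ j \<in> chom (Point X) (Q j) P"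
      unfolding lamR[OF j] hom_char[OF lc H Qj P] using PQ[OF j] by simp
  next
    fix i j f assume i: "i \<in> cob J" and j: "j \<in> cob J" and f: "f \<in> chom J i j"
    show "ccomp (Point X) (lamQ j) (Qa i j f) = lamQ i"
      using lamR[OF i] lamR[OF j] QaR[OF i j f] by (simp add: RR)
  next
    fix L' mu
    assume co: "L' \<in> cob (Point X) \<and> (\<forall>j\<in>cob J. mu j \<in> chom (Point X) (Q j) L') \<and>
       (\<forall>i\<in>cob J. \<forall>j\<in>cob J. \<forall>f\<in>chom J i j. ccomp (Point X) (mu j) (Qa i j f) = mu i)"
    then have L': "L' \<in> cob (Point X)" by blast
    have mu: "\<And>j. j \<in> cob J \<Longrightarrow> mu j = R X \<and> Phi X L' \<subseteq> Phi X (Q j)"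
    proof -
      fix j assume j: "j \<in> cob J"
      have Qj: "Q j \<in> cob (Point X)" using qc[OF j] by blast
      have "mu j \<in> chom (Point X) (Q j) L'" using co j by blast
      then show "mu j = R X \<and> Phi X L' \<subseteq> Phi X (Q j)"
        by (simp add: hom_char[OF lc H Qj L'])
    qed
    have "Phi X L' \<subseteq> Phi X P"
    proof
      fix z assume z: "z \<in> Phi X L'"
      have zc: "closedin X z" using z Phi_closedset[OF lc H L'] by blast
      have zj: "z \<in> perp X (perp X (Phi X Y \<union> Phi X (Do j)))" if j: "j \<in> cob J" for j
      proof -
        have e: "Phi X (Q j) = perp X (perp X (Phi X Y \<union> Phi X (Do j)))" using qc[OF j] by blast
        have "Phi X L' \<subseteq> Phi X (Q j)" using mu[OF j] by blast
        then show ?thesis using z unfolding e by blast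
      qed
      have "z \<in> perp X (perp X (Phi X Y \<union> {C. closedin X C \<and> (\<forall>j\<in>cob J. C \<in> Phi X (Do j))}))"
        by (rule frame[where B="\<lambda>j. Phi X (Do j)" and I="cob J", OF Phi_closedset[OF lc H Y] Phi_fam[OF lc H Do] zc zj])
      moreover have "perp X (perp X (Phi X Y \<union> {C. closedin X C \<and> (\<forall>j\<in>cob J. C \<in> Phi X (Do j))}))
          \<subseteq> perp X (perp X (Phi X Y \<union> Phi X L))"
        using cc by (intro pp_mono) blast
      ultimately show "z \<in> Phi X P" using pc by blast
    qed
    then have R: "R X \<in> chom (Point X) P L'" using hom_char[OF lc H P L'] by simp
    show "\<exists>!u. u \<in> chom (Point X) P L' \<and> (\<forall>j\<in>cob J. ccomp (Point X) u (lamQ j) = mu j)"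
    proof (rule ex1I[of _ "R X"])
      show "R X \<in> chom (Point X) P L' \<and> (\<forall>j\<in>cob J. ccomp (Point X) (R X) (lamQ j) = mu j)"
      proof (intro conjI ballI R)
        fix j assume j: "j \<in> cob J"
        show "ccomp (Point X) (R X) (lamQ j) = mu j" using mu[OF j] lamR[OF j] RR by metis
      qed
      fix u assume "u \<in> chom (Point X) P L' \<and> (\<forall>j\<in>cob J. ccomp (Point X) u (lamQ j) = mu j)"
      then show "u = R X" using hom_char[OF lc H P L'] by blast
    qed
  qed
qed

lemma distr: "products_distribute_over_shape (Point X) J"
  unfolding products_distribute_over_shape_def
proof (intro ballI allI impI, elim conjE)
  fix Y Do Da L lam P p1 p2 Q q1 q2
  assume Y: "Y \<in> cob (Point X)" and Fn: "is_functor J (Point X) Do Da"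
    and c: "is_colimit (Point X) J Do Da L lam"
    and p: "is_product (Point X) Y L P p1 p2"
    and q: "\<forall>j\<in>cob J. is_product (Point X) Y (Do j) (Q j) (q1 j) (q2 j)"
  have Do: "\<And>j. j \<in> cob J \<Longrightarrow> Do j \<in> cob (Point X)" using Fn by (simp add: is_functor_def)
  have Da: "\<And>i j f. i \<in> cob J \<Longrightarrow> j \<in> cob J \<Longrightarrow> f \<in> chom J i j \<Longrightarrow> Da i j f \<in> chom (Point X) (Do i) (Do j)"
    using Fn by (simp add: is_functor_def)
  have cc: "L \<in> cob (Point X) \<and> (\<forall>j\<in>cob J. lam j = R X \<and> Phi X L \<subseteq> Phi X (Do j)) \<and>
         {C. closedin X C \<and> (\<forall>j\<in>cob J. C \<in> Phi X (Do j))} \<subseteq> Phi X L"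
    using colim_char[OF Fn c] .
  then have L: "L \<in> cob (Point X)" by blast
  have pc: "P \<in> cob (Point X) \<and> p1 = R X \<and> p2 = R X \<and> Phi X P = perp X (perp X (Phi X Y \<union> Phi X L))"
    using prod_char[OF Y L p] .
  then have P: "P \<in> cob (Point X)" by blast
  have qc: "\<And>j. j \<in> cob J \<Longrightarrow> Q j \<in> cob (Point X) \<and> q1 j = R X \<and> q2 j = R X \<and>
      Phi X (Q j) = perp X (perp X (Phi X Y \<union> Phi X (Do j)))"
    using prod_char[OF Y Do] q by blast
  have PQ: "Phi X P \<subseteq> Phi X (Q j)" if j: "j \<in> cob J" for j
  proof -
    have "perp X (perp X (Phi X Y \<union> Phi X L)) \<subseteq> perp X (perp X (Phi X Y \<union> Phi X (Do j)))"
      using cc j by (intro pp_mono) blast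
    then show ?thesis using pc qc[OF j] by simp
  qed
  have QQ: "Phi X (Q j) \<subseteq> Phi X (Q i)" if i: "i \<in> cob J" and j: "j \<in> cob J" and f: "f \<in> chom J i j" for i j f
  proof -
    have "Phi X (Do j) \<subseteq> Phi X (Do i)" using Da[OF i j f] hom_char[OF lc H Do[OF i] Do[OF j]] by blast
    then have "perp X (perp X (Phi X Y \<union> Phi X (Do j))) \<subseteq> perp X (perp X (Phi X Y \<union> Phi X (Do i)))"
      by (intro pp_mono) blast
    then show ?thesis using qc[OF i] qc[OF j] by simp
  qed
  show "is_colimit (Point X) J Q
          (\<lambda>i j f. THE u. u \<in> chom (Point X) (Q i) (Q j) \<and> ccomp (Point X) (q1 j) u = q1 i \<and>
                           ccomp (Point X) (q2 j) u = ccomp (Point X) (Da i j f) (q2 i))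
          P
          (\<lambda>j. THE u. u \<in> chom (Point X) (Q j) P \<and> ccomp (Point X) p1 u = q1 j \<and>
                      ccomp (Point X) p2 u = ccomp (Point X) (lam j) (q2 j))"
  proof (rule distr_core[OF Y Fn c p q])
    fix i j f assume i: "i \<in> cob J" and j: "j \<in> cob J" and f: "f \<in> chom J i j"
    have DaR: "Da i j f = R X" using Da[OF i j f] hom_char[OF lc H Do[OF i] Do[OF j]] by blast
    have Qi: "Q i \<in> cob (Point X)" and Qj: "Q j \<in> cob (Point X)" using qc[OF i] qc[OF j] by auto
    show "(THE u. u \<in> chom (Point X) (Q i) (Q j) \<and> ccomp (Point X) (q1 j) u = q1 i \<and>
                           ccomp (Point X) (q2 j) u = ccomp (Point X) (Da i j f) (q2 i)) = R X"
    proof (rule the_equality)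
      show "R X \<in> chom (Point X) (Q i) (Q j) \<and> ccomp (Point X) (q1 j) (R X) = q1 i \<and>
                           ccomp (Point X) (q2 j) (R X) = ccomp (Point X) (Da i j f) (q2 i)"
        using hom_char[OF lc H Qi Qj] QQ[OF i j f] qc[OF i] qc[OF j] DaR by (simp add: RR)
      fix u assume "u \<in> chom (Point X) (Q i) (Q j) \<and> ccomp (Point X) (q1 j) u = q1 i \<and>
                           ccomp (Point X) (q2 j) u = ccomp (Point X) (Da i j f) (q2 i)"
      then show "u = R X" using hom_char[OF lc H Qi Qj] by blast
    qed
  next
    fix j assume j: "j \<in> cob J"
    have Qj: "Q j \<in> cob (Point X)" using qc[OF j] by auto
    have lamj: "lam j = R X" using cc j by blast
    show "(THE u. u \<in> chom (Point X) (Q j) P \<and> ccomp (Point X) p1 u = q1 j \<and>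
                      ccomp (Point X) p2 u = ccomp (Point X) (lam j) (q2 j)) = R X"
    proof (rule the_equality)
      show "R X \<in> chom (Point X) (Q j) P \<and> ccomp (Point X) p1 (R X) = q1 j \<and>
                      ccomp (Point X) p2 (R X) = ccomp (Point X) (lam j) (q2 j)"
        using hom_char[OF lc H Qj P] PQ[OF j] qc[OF j] pc lamj by (simp add: RR)
      fix u assume "u \<in> chom (Point X) (Q j) P \<and> ccomp (Point X) p1 u = q1 j \<and>
                      ccomp (Point X) p2 u = ccomp (Point X) (lam j) (q2 j)"
      then show "u = R X" using hom_char[OF lc H Qj P] by blast
    qed
  next
    fix j assume "j \<in> cob J" then show "Phi X P \<subseteq> Phi X (Q j)" by (rule PQ)
  qed
qed

end

theorem mainTheorem9:
  fixes X :: "'a topology"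
  assumes "locally_compact_space X" and "Hausdorff_space X"
  shows "category (Point X) \<and>
         is_poset_cat (Point X) \<and>
         (\<forall>J :: ('j, 'b) cat. category J \<longrightarrow> has_colimits_of_shape (Point X) J) \<and>
         (\<exists>I. initial_object (Point X) I) \<and>
         (\<forall>J :: ('j, 'b) cat. category J \<longrightarrow> has_limits_of_shape (Point X) J) \<and>
         (\<exists>T. terminal_object (Point X) T) \<and>
         (\<forall>J :: ('j, 'b) cat. category J \<longrightarrow> products_distribute_over_shape (Point X) J)"
  unfolding has_colimits_of_shape_def has_limits_of_shape_def
  using category_Point[OF assms] poset_Point[OF assms] initial_exists[OF assms] terminal_exists[OF assms]
    colim_exists[OF assms] lim_exists[OF assms] distr[OF assms]
  by blast


end
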